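(* Let $\alpha>0$, $A\ge0$, $B>0$, $t>0$, $w(x,t)=x^\alpha e^{-x}(A+B\theta(x-t))$ on $[0,\infty)$, and $D_n(t)=\det\left(\int_0^\infty x^{i+j}w(x,t)dx\right)_{i,j=0}^{n-1}$ (with $D_0:=1$). Then for $n\ge1$ $$t^2\frac{d^2}{dt^2}\ln D_n(t)=-n(n+\alpha)+\frac{D_{n+1}(t)D_{n-1}(t)}{D_n(t)^2}.$$
   Context: $\theta$ is the Heaviside function ($1$ for $x>0$, $0$ otherwise). *)

theory Defs
  imports "HOL-Analysis.Analysis" "Jordan_Normal_Form.Determinant"
begin

definition heaviside :: "real \<Rightarrow> real" where
  "heaviside x = (if x > 0 then 1 else 0)"

definition weight :: "real \<Rightarrow> real \<Rightarrow> real \<Rightarrow> real \<Rightarrow> real \<Rightarrow> real" where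
  "weight \<alpha> A B t x = x powr \<alpha> * exp (- x) * (A + B * heaviside (x - t))"

definition moment :: "real \<Rightarrow> real \<Rightarrow> real \<Rightarrow> real \<Rightarrow> nat \<Rightarrow> real" where
  "moment \<alpha> A B t k = (LBINT x:{0..}. x ^ k * weight \<alpha> A B t x)"

definition hankelD :: "real \<Rightarrow> real \<Rightarrow> real \<Rightarrow> nat \<Rightarrow> real \<Rightarrow> real" where
  "hankelD \<alpha> A B n t = det (mat n n (\<lambda>(i, j). moment \<alpha> A B t (i + j)))"

end

theory Submission
  imports Defs
begin


definition hank :: "(nat \<Rightarrow> real) \<Rightarrow> nat \<Rightarrow> real mat" where
  "hank \<mu> m = mat m m (\<lambda>(i,j). \<mu> (i+j))"

definition Kinv :: "(nat \<Rightarrow> real) \<Rightarrow> nat \<Rightarrow> nat \<Rightarrow> nat \<Rightarrow> real" where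
  "Kinv \<mu> m i j = cofactor (hank \<mu> m) j i / det (hank \<mu> m)"

lemma hank_carrier[simp]: "hank \<mu> m \<in> carrier_mat m m"
  by (simp add: hank_def)

lemma hank_dim[simp]: "dim_row (hank \<mu> m) = m" "dim_col (hank \<mu> m) = m"
  by (simp_all add: hank_def)

lemma hank_index[simp]: "i < m \<Longrightarrow> j < m \<Longrightarrow> hank \<mu> m $$ (i,j) = \<mu> (i+j)"
  by (simp add: hank_def)

lemma adj_entries:
  assumes "i < m" "j < m"
  shows "(\<Sum>l<m. \<mu> (i+l) * cofactor (hank \<mu> m) j l) = (if i = j then det (hank \<mu> m) else 0)"
    and "(\<Sum>l<m. cofactor (hank \<mu> m) l i * \<mu> (l+j)) = (if i = j then det (hank \<mu> m) else 0)"
proof -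
  have "(hank \<mu> m * adj_mat (hank \<mu> m)) $$ (i,j) = (det (hank \<mu> m) \<cdot>\<^sub>m 1\<^sub>m m) $$ (i,j)"
    using adj_mat(2)[OF hank_carrier] by simp
  moreover have "(hank \<mu> m * adj_mat (hank \<mu> m)) $$ (i,j) = (\<Sum>l<m. \<mu> (i+l) * cofactor (hank \<mu> m) j l)"
    using assms by (simp add: scalar_prod_def adj_mat_def atLeast0LessThan)
  ultimately show "(\<Sum>l<m. \<mu> (i+l) * cofactor (hank \<mu> m) j l) = (if i = j then det (hank \<mu> m) else 0)"
    using assms by simp
  have "(adj_mat (hank \<mu> m) * hank \<mu> m) $$ (i,j) = (det (hank \<mu> m) \<cdot>\<^sub>m 1\<^sub>m m) $$ (i,j)"
    using adj_mat(3)[OF hank_carrier] by simp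
  moreover have "(adj_mat (hank \<mu> m) * hank \<mu> m) $$ (i,j) = (\<Sum>l<m. cofactor (hank \<mu> m) l i * \<mu> (l+j))"
    using assms by (simp add: scalar_prod_def adj_mat_def atLeast0LessThan)
  ultimately show "(\<Sum>l<m. cofactor (hank \<mu> m) l i * \<mu> (l+j)) = (if i = j then det (hank \<mu> m) else 0)"
    using assms by simp
qed

lemma Kinv_right:
  assumes "det (hank \<mu> m) \<noteq> 0" "i < m" "j < m"
  shows "(\<Sum>l<m. \<mu> (i+l) * Kinv \<mu> m l j) = (if i = j then 1 else 0)"
proof -
  have "(\<Sum>l<m. \<mu> (i+l) * Kinv \<mu> m l j) = (\<Sum>l<m. \<mu> (i+l) * cofactor (hank \<mu> m) j l) / det (hank \<mu> m)"
    by (simp add: Kinv_def sum_divide_distrib)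
  then show ?thesis using adj_entries(1)[OF assms(2,3)] assms(1) by simp
qed

lemma Kinv_left:
  assumes "det (hank \<mu> m) \<noteq> 0" "i < m" "j < m"
  shows "(\<Sum>l<m. Kinv \<mu> m i l * \<mu> (l+j)) = (if i = j then 1 else 0)"
proof -
  have "(\<Sum>l<m. Kinv \<mu> m i l * \<mu> (l+j)) = (\<Sum>l<m. cofactor (hank \<mu> m) l i * \<mu> (l+j)) / det (hank \<mu> m)"
    by (simp add: Kinv_def sum_divide_distrib)
  then show ?thesis using adj_entries(2)[OF assms(2,3)] assms(1) by simp
qed

lemma Kinv_sym:
  assumes "det (hank \<mu> m) \<noteq> 0" "i < m" "j < m"
  shows "Kinv \<mu> m i j = Kinv \<mu> m j i"
proof -
  let ?K = "Kinv \<mu> m"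
  have "?K j i = (\<Sum>l<m. (if i = l then 1 else 0) * ?K j l)"
    using assms by (simp add: if_distrib[of "\<lambda>x. x * _"] cong: if_cong)
  also have "\<dots> = (\<Sum>l<m. (\<Sum>p<m. ?K i p * \<mu> (p+l)) * ?K j l)"
    using Kinv_left[OF assms(1) assms(2)] by (intro sum.cong refl) simp
  also have "\<dots> = (\<Sum>p<m. ?K i p * (\<Sum>l<m. ?K j l * \<mu> (l+p)))"
    by (simp add: sum_distrib_left sum_distrib_right mult_ac) (subst sum.swap, auto intro!: sum.cong simp: add.commute)
  also have "\<dots> = (\<Sum>p<m. ?K i p * (if j = p then 1 else 0))"
    using Kinv_left[OF assms(1) assms(3)] by (intro sum.cong refl) simp
  also have "\<dots> = ?K i j" using assms by (simp add: if_distrib[of "\<lambda>x. _ * x"] cong: if_cong)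
  finally show ?thesis by simp
qed

lemma mat_delete_row_irrel:
  assumes "k < n"
  shows "mat_delete (mat n n (\<lambda>(i,j). if i = k then g j else h i j)) k j =
         mat_delete (mat n n (\<lambda>(i,j). h i j)) k j"
  unfolding mat_delete_def using assms by (intro eq_matI) auto

lemma jacobi_det:
  fixes f :: "real \<Rightarrow> nat \<Rightarrow> nat \<Rightarrow> real"
  assumes d: "\<And>i j. i < n \<Longrightarrow> j < n \<Longrightarrow> ((\<lambda>s. f s i j) has_real_derivative f' i j) (at x)"
  shows "((\<lambda>s. det (mat n n (\<lambda>(i,j). f s i j))) has_real_derivative
           (\<Sum>i<n. \<Sum>j<n. f' i j * cofactor (mat n n (\<lambda>(i,j). f x i j)) i j)) (at x)"
proof -
  define P where "P = {p. p permutes {0..<n}}"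
  have finP: "finite P" unfolding P_def by (simp add: finite_permutations)
  have eq: "det (mat n n (\<lambda>(i,j). f s i j)) = (\<Sum>p\<in>P. signof p * (\<Prod>i\<in>{0..<n}. f s i (p i)))" for s
    unfolding det_def P_def
    by (auto intro!: sum.cong prod.cong simp: permutes_in_image)
  have der: "((\<lambda>s. \<Sum>p\<in>P. signof p * (\<Prod>i\<in>{0..<n}. f s i (p i))) has_real_derivative
     (\<Sum>p\<in>P. signof p * (\<Sum>k\<in>{0..<n}. f' k (p k) * (\<Prod>y\<in>{0..<n}-{k}. f x y (p y))))) (at x)"
    apply (intro DERIV_sum DERIV_cmult has_field_derivative_prod)
    apply (rule d)
    by (auto simp: P_def permutes_in_image)
  have val: "(\<Sum>p\<in>P. signof p * (\<Sum>k\<in>{0..<n}. f' k (p k) * (\<Prod>y\<in>{0..<n}-{k}. f x y (p y))))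
      = (\<Sum>i<n. \<Sum>j<n. f' i j * cofactor (mat n n (\<lambda>(i,j). f x i j)) i j)"
  proof -
    have "(\<Sum>p\<in>P. signof p * (\<Sum>k\<in>{0..<n}. f' k (p k) * (\<Prod>y\<in>{0..<n}-{k}. f x y (p y))))
        = (\<Sum>k\<in>{0..<n}. \<Sum>p\<in>P. signof p * (f' k (p k) * (\<Prod>y\<in>{0..<n}-{k}. f x y (p y))))"
      by (subst sum.swap) (simp add: sum_distrib_left)
    also have "\<dots> = (\<Sum>k\<in>{0..<n}. \<Sum>j<n. f' k j * cofactor (mat n n (\<lambda>(i,j). f x i j)) k j)"
    proof (rule sum.cong[OF refl])
      fix k assume k: "k \<in> {0..<n}"
      define Bk where "Bk = mat n n (\<lambda>(i,j). if i = k then f' k j else f x i j)"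
      have "det Bk = (\<Sum>p\<in>P. signof p * (\<Prod>i\<in>{0..<n}. Bk $$ (i, p i)))"
        unfolding det_def P_def Bk_def by simp
      also have "\<dots> = (\<Sum>p\<in>P. signof p * (f' k (p k) * (\<Prod>y\<in>{0..<n}-{k}. f x y (p y))))"
      proof (rule sum.cong[OF refl])
        fix p assume p: "p \<in> P"
        have "(\<Prod>i\<in>{0..<n}. Bk $$ (i, p i)) = Bk $$ (k, p k) * (\<Prod>i\<in>{0..<n}-{k}. Bk $$ (i, p i))"
          using k by (simp add: prod.remove)
        also have "\<dots> = f' k (p k) * (\<Prod>y\<in>{0..<n}-{k}. f x y (p y))"
          using k p unfolding Bk_def P_def
          by (auto intro!: prod.cong simp: permutes_in_image)
        finally show "signof p * (\<Prod>i\<in>{0..<n}. Bk $$ (i, p i)) = signof p * (f' k (p k) * (\<Prod>y\<in>{0..<n}-{k}. f x y (p y)))"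
          by simp
      qed
      finally have 1: "det Bk = (\<Sum>p\<in>P. signof p * (f' k (p k) * (\<Prod>y\<in>{0..<n}-{k}. f x y (p y))))" .
      have "det Bk = (\<Sum>j<n. Bk $$ (k,j) * cofactor Bk k j)"
        by (rule laplace_expansion_row) (use k in \<open>auto simp: Bk_def\<close>)
      also have "\<dots> = (\<Sum>j<n. f' k j * cofactor (mat n n (\<lambda>(i,j). f x i j)) k j)"
        using k unfolding cofactor_def Bk_def
        by (intro sum.cong refl) (simp add: mat_delete_row_irrel[of k n "f' k" "f x"] )
      finally show "(\<Sum>p\<in>P. signof p * (f' k (p k) * (\<Prod>y\<in>{0..<n}-{k}. f x y (p y)))) =
          (\<Sum>j<n. f' k j * cofactor (mat n n (\<lambda>(i,j). f x i j)) k j)" using 1 by simp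
    qed
    finally show ?thesis by (simp add: atLeast0LessThan)
  qed
  show ?thesis unfolding eq using der val by simp
qed


lemma mat_delete_hank_last: "mat_delete (hank \<mu> (Suc m)) m m = hank \<mu> m"
  unfolding mat_delete_def hank_def by (intro eq_matI) auto

lemma cofactor_hank_last: "cofactor (hank \<mu> (Suc m)) m m = det (hank \<mu> m)"
  unfolding cofactor_def mat_delete_hank_last by simp

lemma schur_hank:
  assumes D: "det (hank \<mu> m) \<noteq> 0"
  shows "det (hank \<mu> (Suc m)) = det (hank \<mu> m) *
     (\<mu> (2*m) - (\<Sum>i<m. \<Sum>j<m. \<mu> (m+i) * Kinv \<mu> m i j * \<mu> (m+j)))"
proof -
  define q where "q i = (\<Sum>j<m. Kinv \<mu> m i j * \<mu> (m+j))" for i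
  define h where "h = \<mu> (2*m) - (\<Sum>i<m. \<mu> (m+i) * q i)"
  define E where "E = mat (Suc m) (Suc m) (\<lambda>(i,j). if i = j then 1 else if j = m then - q i else (0::real))"
  define H where "H = hank \<mu> (Suc m)"
  have Ec: "E \<in> carrier_mat (Suc m) (Suc m)" by (simp add: E_def)
  have Hc: "H \<in> carrier_mat (Suc m) (Suc m)" by (simp add: H_def)
  have "det E = prod_list (diag_mat E)"
    by (rule det_upper_triangular[OF _ Ec]) (auto simp: upper_triangular_def E_def)
  also have "\<dots> = 1"
    unfolding prod_list_diag_prod by (auto simp: E_def intro!: prod.neutral)
  finally have dE: "det E = 1" .
  have HE_col: "(H * E) $$ (i,j) = H $$ (i,j)" if "i < Suc m" "j < m" for i j
  proof -
    have "(H * E) $$ (i,j) = (\<Sum>l\<in>{0..<Suc m}. H $$ (i,l) * E $$ (l,j))"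
      using that Hc Ec by (simp add: scalar_prod_def)
    also have "\<dots> = (\<Sum>l\<in>{0..<Suc m}. if l = j then H $$ (i,l) else 0)"
      using that by (intro sum.cong refl) (auto simp: E_def)
    also have "\<dots> = H $$ (i,j)" using that by simp
    finally show ?thesis .
  qed
  have HE_last: "(H * E) $$ (i,m) = \<mu> (i+m) - (\<Sum>l<m. \<mu> (i+l) * q l)" if "i < Suc m" for i
  proof -
    have "(H * E) $$ (i,m) = (\<Sum>l\<in>{0..<Suc m}. H $$ (i,l) * E $$ (l,m))"
      using that Hc Ec by (simp add: scalar_prod_def)
    also have "\<dots> = (\<Sum>l<Suc m. \<mu> (i+l) * (if l = m then 1 else - q l))"
      using that by (intro sum.cong) (auto simp: E_def H_def)
    also have "\<dots> = \<mu> (i+m) - (\<Sum>l<m. \<mu> (i+l) * q l)"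
      by (simp add: sum_negf)
    finally show ?thesis .
  qed
  have HE_zero: "(H * E) $$ (i,m) = 0" if "i < m" for i
  proof -
    have "(\<Sum>l<m. \<mu> (i+l) * q l) = (\<Sum>j<m. (\<Sum>l<m. \<mu> (i+l) * Kinv \<mu> m l j) * \<mu> (m+j))"
      unfolding q_def by (simp add: sum_distrib_left sum_distrib_right mult_ac) (rule sum.swap)
    also have "\<dots> = (\<Sum>j<m. (if i = j then 1 else 0) * \<mu> (m+j))"
      using Kinv_right[OF D that] by (intro sum.cong refl) simp
    also have "\<dots> = \<mu> (i+m)" using that by (simp add: if_distrib[of "\<lambda>x. x * _"] add.commute cong: if_cong)
    finally show ?thesis using HE_last[of i] that by simp
  qed
  have HEc: "H * E \<in> carrier_mat (Suc m) (Suc m)" using Hc Ec by simp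
  have "det (H * E) = (\<Sum>i<Suc m. (H * E) $$ (i,m) * cofactor (H * E) i m)"
    by (rule laplace_expansion_column[OF HEc]) simp
  also have "\<dots> = (H * E) $$ (m,m) * cofactor (H * E) m m"
    by (subst sum.lessThan_Suc) (simp add: HE_zero)
  also have "(H * E) $$ (m,m) = h"
    using HE_last[of m] by (simp add: h_def mult_2 add.commute)
  also have "mat_delete (H * E) m m = hank \<mu> m"
  proof (rule eq_matI)
    fix i j assume ij: "i < dim_row (hank \<mu> m)" "j < dim_col (hank \<mu> m)"
    then have "mat_delete (H * E) m m $$ (i,j) = (H * E) $$ (i,j)"
      using Hc Ec by (simp add: mat_delete_def)
    also have "\<dots> = H $$ (i,j)" using ij by (intro HE_col) auto
    finally show "mat_delete (H * E) m m $$ (i,j) = hank \<mu> m $$ (i,j)" using ij by (simp add: H_def)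
  qed (use HEc in auto)
  then have "cofactor (H * E) m m = det (hank \<mu> m)" by (simp add: cofactor_def)
  finally have "det (H * E) = h * det (hank \<mu> m)" .
  moreover have "det (H * E) = det H" using det_mult[OF Hc Ec] dE by simp
  ultimately show ?thesis
    unfolding H_def h_def q_def by (simp add: sum_distrib_left mult_ac)
qed



lemma sum_idx_real: "(\<Sum>i<n. real i) = real n * (real n - 1) / 2"
  by (induction n) (auto simp: field_simps)

lemma key_identity:
  fixes \<mu> :: "nat \<Rightarrow> real" and \<alpha> c s :: real and m :: nat
  assumes rel: "\<And>k. \<mu> (Suc k) = (real k + \<alpha> + 1) * \<mu> k - c * s ^ k"
    and D: "det (hank \<mu> (Suc m)) \<noteq> 0"
  defines "n \<equiv> Suc m"
  defines "K \<equiv> Kinv \<mu> n"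
  defines "a \<equiv> (\<Sum>i<n. \<Sum>j<n. s^i * K i j * s^j)"
  defines "b \<equiv> (\<Sum>i<n. \<Sum>j<n. real i * s^i * K i j * s^j)"
  shows "c * (\<alpha> - s) * a + c * (2 * b - c * a^2) =
     - real n * (real n + \<alpha>) + (\<mu> (2*n) - (\<Sum>i<n. \<Sum>j<n. \<mu> (n+i) * K i j * \<mu> (n+j))) * K m m"
proof -
  have Dn: "det (hank \<mu> n) \<noteq> 0" using D by (simp add: n_def)
  have KR: "(\<Sum>l<n. \<mu> (i+l) * K l j) = (if i = j then 1 else 0)" if "i < n" "j < n" for i j
    unfolding K_def by (rule Kinv_right[OF Dn that])
  have KL: "(\<Sum>l<n. K i l * \<mu> (l+j)) = (if i = j then 1 else 0)" if "i < n" "j < n" for i j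
    unfolding K_def by (rule Kinv_left[OF Dn that])
  have KS: "K i j = K j i" if "i < n" "j < n" for i j
    unfolding K_def by (rule Kinv_sym[OF Dn that])
  define w where "w i = \<mu> (n+i)" for i
  define q where "q i = (\<Sum>j<n. K i j * w j)" for i
  define u where "u i = (\<Sum>j<n. K i j * s^j)" for i
  define h where "h = \<mu> (2*n) - (\<Sum>i<n. w i * q i)"
  define P where "P = s^n - (\<Sum>i<n. q i * s^i)"
  have hh: "(\<Sum>i<n. \<Sum>j<n. \<mu> (n+i) * K i j * \<mu> (n+j)) = (\<Sum>i<n. w i * q i)"
    unfolding w_def q_def by (simp add: sum_distrib_left mult_ac)
  have aa: "a = (\<Sum>i<n. s^i * u i)"
    unfolding a_def u_def by (simp add: sum_distrib_left mult_ac)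
  have bb: "b = (\<Sum>i<n. real i * s^i * u i)"
    unfolding b_def u_def by (simp add: sum_distrib_left mult_ac)
  have Mu: "(\<Sum>j<n. \<mu> (i+j) * u j) = s^i" if "i < n" for i
  proof -
    have "(\<Sum>j<n. \<mu> (i+j) * u j) = (\<Sum>l<n. (\<Sum>j<n. \<mu> (i+j) * K j l) * s^l)"
      unfolding u_def by (simp add: sum_distrib_left sum_distrib_right mult_ac) (rule sum.swap)
    also have "\<dots> = (\<Sum>l<n. (if i = l then 1 else 0) * s^l)"
      using KR that by (intro sum.cong refl) simp
    also have "\<dots> = s^i" using that by (simp add: if_distrib[of "\<lambda>x. x * _"] cong: if_cong)
    finally show ?thesis .
  qed
  have Mq: "(\<Sum>j<n. \<mu> (i+j) * q j) = w i" if "i < n" for i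
  proof -
    have "(\<Sum>j<n. \<mu> (i+j) * q j) = (\<Sum>l<n. (\<Sum>j<n. \<mu> (i+j) * K j l) * w l)"
      unfolding q_def by (simp add: sum_distrib_left sum_distrib_right mult_ac) (rule sum.swap)
    also have "\<dots> = (\<Sum>l<n. (if i = l then 1 else 0) * w l)"
      using KR that by (intro sum.cong refl) simp
    also have "\<dots> = w i" using that by (simp add: if_distrib[of "\<lambda>x. x * _"] cong: if_cong)
    finally show ?thesis .
  qed
  have mn: "m < n" by (simp add: n_def)
  have uq: "(\<Sum>j<n. w j * u j) = (\<Sum>i<n. q i * s^i)"
  proof -
    have "(\<Sum>j<n. w j * u j) = (\<Sum>j<n. \<Sum>l<n. K j l * w j * s^l)"
      unfolding u_def by (simp add: sum_distrib_left mult_ac)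
    also have "\<dots> = (\<Sum>l<n. \<Sum>j<n. K l j * w j * s^l)"
      by (subst sum.swap) (auto intro!: sum.cong simp: KS)
    also have "\<dots> = (\<Sum>i<n. q i * s^i)"
      unfolding q_def by (simp add: sum_distrib_left sum_distrib_right mult_ac)
    finally show ?thesis .
  qed
  have um: "u m = (\<Sum>j<n. K j m * s^j)"
    unfolding u_def using mn by (auto intro!: sum.cong simp: KS)
  have I1: "q m = real n * (real n + \<alpha>) - c * a"
  proof -
    define T where "T = (\<Sum>j<n. \<Sum>i<n. K j i * \<mu> (i + Suc j))"
    have "T = (\<Sum>j<n. \<Sum>i<n. K j i * ((real (i+j) + \<alpha> + 1) * \<mu> (i+j) - c * s^(i+j)))"
      unfolding T_def by (intro sum.cong refl) (metis add_Suc_right rel)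
    also have "\<dots> = (\<Sum>j<n. \<Sum>i<n. real i * (\<mu> (i+j) * K j i))
        + (\<Sum>j<n. (real j + \<alpha> + 1) * (\<Sum>i<n. K j i * \<mu> (i+j)))
        - c * (\<Sum>j<n. \<Sum>i<n. s^i * K j i * s^j)"
      by (simp add: sum_distrib_left sum_subtractf sum.distrib algebra_simps power_add)
    also have "(\<Sum>j<n. \<Sum>i<n. real i * (\<mu> (i+j) * K j i)) = (\<Sum>i<n. real i * (\<Sum>j<n. \<mu> (i+j) * K j i))"
      by (subst sum.swap) (simp add: sum_distrib_left)
    also have "\<dots> = (\<Sum>i<n. real i)" using KR by (intro sum.cong refl) simp
    also have "(\<Sum>j<n. (real j + \<alpha> + 1) * (\<Sum>i<n. K j i * \<mu> (i+j))) = (\<Sum>j<n. real j + \<alpha> + 1)"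
      using KL by (intro sum.cong refl) simp
    also have "(\<Sum>j<n. \<Sum>i<n. s^i * K j i * s^j) = a"
      unfolding a_def by (intro sum.cong refl) (simp add: mult_ac)
    finally have T1: "T = (\<Sum>i<n. real i) + (\<Sum>j<n. real j + \<alpha> + 1) - c * a" .
    have "T = (\<Sum>j<m. \<Sum>i<n. K j i * \<mu> (i + Suc j)) + (\<Sum>i<n. K m i * \<mu> (i + n))"
      unfolding T_def n_def by (simp add: add.commute)
    also have "(\<Sum>j<m. \<Sum>i<n. K j i * \<mu> (i + Suc j)) = 0"
    proof -
      have Z: "(\<Sum>i<n. K j i * \<mu> (i + Suc j)) = 0" if "j < m" for j
      proof -
        have "j < n" "Suc j < n" using that by (auto simp: n_def)
        from KL[OF this] show ?thesis by simp
      qed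
      show ?thesis by (rule sum.neutral, intro ballI, rule Z, simp)
    qed
    also have "(\<Sum>i<n. K m i * \<mu> (i + n)) = q m"
      unfolding q_def w_def by (simp add: add.commute)
    finally have "T = q m" by simp
    with T1 show ?thesis by (simp add: sum.distrib sum_idx_real algebra_simps)
  qed
  have I2: "s * a - s^n * u m + u m * (\<Sum>j<n. w j * u j) = 2 * b + (\<alpha> + 1) * a - c * a^2"
  proof -
    define S where "S = (\<Sum>i<n. \<Sum>j<n. u i * u j * \<mu> (Suc i + j))"
    have "S = (\<Sum>i<n. \<Sum>j<n. u i * u j * ((real (i+j) + \<alpha> + 1) * \<mu> (i+j) - c * s^(i+j)))"
      unfolding S_def by (intro sum.cong refl) (metis add_Suc rel)
    also have "\<dots> = (\<Sum>i<n. \<Sum>j<n. real i * u i * (\<mu> (i+j) * u j) + real j * u j * (\<mu> (i+j) * u i)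
         + (\<alpha> + 1) * (u i * (\<mu> (i+j) * u j)) - c * ((s^i * u i) * (s^j * u j)))"
      by (intro sum.cong refl) (simp add: algebra_simps power_add)
    also have "\<dots> = (\<Sum>i<n. \<Sum>j<n. real i * u i * (\<mu> (i+j) * u j)) + (\<Sum>i<n. \<Sum>j<n. real j * u j * (\<mu> (i+j) * u i))
         + (\<alpha> + 1) * (\<Sum>i<n. \<Sum>j<n. u i * (\<mu> (i+j) * u j)) - c * (\<Sum>i<n. \<Sum>j<n. (s^i * u i) * (s^j * u j))"
      by (simp add: sum.distrib sum_subtractf sum_distrib_left)
    also have "(\<Sum>i<n. \<Sum>j<n. real i * u i * (\<mu> (i+j) * u j)) = (\<Sum>i<n. real i * u i * (\<Sum>j<n. \<mu> (i+j) * u j))"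
      by (simp add: sum_distrib_left)
    also have "(\<Sum>i<n. \<Sum>j<n. real j * u j * (\<mu> (i+j) * u i)) = (\<Sum>j<n. real j * u j * (\<Sum>i<n. \<mu> (j+i) * u i))"
      by (subst sum.swap) (simp add: sum_distrib_left add.commute)
    also have "(\<Sum>i<n. \<Sum>j<n. u i * (\<mu> (i+j) * u j)) = (\<Sum>i<n. u i * (\<Sum>j<n. \<mu> (i+j) * u j))"
      by (simp add: sum_distrib_left)
    also have "(\<Sum>i<n. \<Sum>j<n. (s^i * u i) * (s^j * u j)) = (\<Sum>i<n. s^i * u i) * (\<Sum>j<n. s^j * u j)"
      by (simp add: sum_product)
    finally have S0: "S = (\<Sum>i<n. real i * u i * (\<Sum>j<n. \<mu> (i+j) * u j)) + (\<Sum>j<n. real j * u j * (\<Sum>i<n. \<mu> (j+i) * u i))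
         + (\<alpha> + 1) * (\<Sum>i<n. u i * (\<Sum>j<n. \<mu> (i+j) * u j)) - c * ((\<Sum>i<n. s^i * u i) * (\<Sum>j<n. s^j * u j))" .
    have e1: "(\<Sum>i<n. real i * u i * (\<Sum>j<n. \<mu> (i+j) * u j)) = b"
      unfolding bb by (intro sum.cong refl, subst Mu, simp, simp add: mult_ac)
    have e2: "(\<Sum>j<n. real j * u j * (\<Sum>i<n. \<mu> (j+i) * u i)) = b"
      unfolding bb by (intro sum.cong refl, subst Mu, simp, simp add: mult_ac)
    have e3: "(\<Sum>i<n. u i * (\<Sum>j<n. \<mu> (i+j) * u j)) = a"
      unfolding aa by (intro sum.cong refl, subst Mu, simp, simp add: mult_ac)
    have S1: "S = 2 * b + (\<alpha> + 1) * a - c * a^2"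
      unfolding S0 e1 e2 e3 aa[symmetric] by (simp add: power2_eq_square)
    have "S = (\<Sum>i<m. u i * (\<Sum>j<n. \<mu> (Suc i + j) * u j)) + u m * (\<Sum>j<n. \<mu> (n + j) * u j)"
      unfolding S_def n_def by (simp add: sum_distrib_left distrib_left mult_ac)
    also have "(\<Sum>i<m. u i * (\<Sum>j<n. \<mu> (Suc i + j) * u j)) = (\<Sum>i<m. u i * s^(Suc i))"
    proof (intro sum.cong refl)
      fix i assume "i \<in> {..<m}"
      then have "Suc i < n" by (simp add: n_def)
      show "u i * (\<Sum>j<n. \<mu> (Suc i + j) * u j) = u i * s^(Suc i)" by (simp only: Mu[OF \<open>Suc i < n\<close>])
    qed
    also have "(\<Sum>i<m. u i * s^(Suc i)) = s * ((\<Sum>i<n. s^i * u i) - s^m * u m)"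
      by (simp add: n_def sum_distrib_left mult_ac)
    finally have "S = s * a - s^n * u m + u m * (\<Sum>j<n. w j * u j)"
      by (simp add: aa w_def n_def algebra_simps)
    with S1 show ?thesis by simp
  qed
  have I3: "K m m * h = q m - c * P * u m"
  proof -
    define x where "x i = (if i = n then 1 else - q i)" for i
    define X where "X j = (\<Sum>i<Suc n. x i * \<mu> (i+j))" for j
    have Xj: "X j = \<mu> (n+j) - (\<Sum>i<n. q i * \<mu> (i+j))" for j
      unfolding X_def x_def by (simp add: sum_negf add.commute)
    have X0: "X j = 0" if "j < n" for j
    proof -
      have "(\<Sum>i<n. q i * \<mu> (i+j)) = (\<Sum>i<n. \<mu> (j+i) * q i)" by (simp add: mult_ac add.commute)
      then show ?thesis using Mq[OF that] Xj by (simp add: w_def)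
    qed
    have Xn: "X n = h"
      unfolding Xj h_def w_def by (simp add: mult_2_right mult_ac add.commute)
    define S where "S = (\<Sum>i<Suc n. \<Sum>j<n. x i * K j m * \<mu> (i + Suc j))"
    have "S = (\<Sum>j<n. K j m * X (Suc j))"
      unfolding S_def X_def by (subst sum.swap) (simp add: sum_distrib_left distrib_left mult_ac)
    also have "\<dots> = (\<Sum>j<m. K j m * X (Suc j)) + K m m * X n"
      by (simp add: n_def)
    also have "(\<Sum>j<m. K j m * X (Suc j)) = 0"
      using X0 by (intro sum.neutral) (auto simp: n_def)
    finally have S1: "S = K m m * h" using Xn by simp
    have "S = (\<Sum>i<Suc n. \<Sum>j<n. x i * K j m * ((real (i+j) + \<alpha> + 1) * \<mu> (i+j) - c * s^(i+j)))"
      unfolding S_def by (intro sum.cong refl) (metis add_Suc_right rel)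
    also have "\<dots> = (\<Sum>i<Suc n. \<Sum>j<n. real i * x i * (\<mu> (i+j) * K j m) + (real j + \<alpha> + 1) * K j m * (x i * \<mu> (i+j))
         - c * ((x i * s^i) * (K j m * s^j)))"
      by (intro sum.cong refl) (simp add: algebra_simps power_add)
    also have "\<dots> = (\<Sum>i<Suc n. \<Sum>j<n. real i * x i * (\<mu> (i+j) * K j m)) + (\<Sum>i<Suc n. \<Sum>j<n. (real j + \<alpha> + 1) * K j m * (x i * \<mu> (i+j)))
         - c * (\<Sum>i<Suc n. \<Sum>j<n. (x i * s^i) * (K j m * s^j))"
      by (simp add: sum.distrib sum_subtractf sum_distrib_left ring_distribs)
    also have "(\<Sum>i<Suc n. \<Sum>j<n. real i * x i * (\<mu> (i+j) * K j m)) = (\<Sum>i<Suc n. real i * x i * (\<Sum>j<n. \<mu> (i+j) * K j m))"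
      by (simp add: sum_distrib_left)
    also have "(\<Sum>i<Suc n. \<Sum>j<n. (real j + \<alpha> + 1) * K j m * (x i * \<mu> (i+j))) = (\<Sum>j<n. (real j + \<alpha> + 1) * K j m * X j)"
      unfolding X_def by (subst sum.swap) (simp add: sum_distrib_left distrib_left)
    also have "(\<Sum>i<Suc n. \<Sum>j<n. (x i * s^i) * (K j m * s^j)) = (\<Sum>i<Suc n. x i * s^i) * (\<Sum>j<n. K j m * s^j)"
      by (simp only: sum_product)
    also have "(\<Sum>j<n. (real j + \<alpha> + 1) * K j m * X j) = 0"
      using X0 by (intro sum.neutral) auto
    also have "(\<Sum>i<Suc n. x i * s^i) = P"
      unfolding P_def x_def by (simp add: sum_negf)
    also have "(\<Sum>j<n. K j m * s^j) = u m" using um by simp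
    also have "(\<Sum>i<Suc n. real i * x i * (\<Sum>j<n. \<mu> (i+j) * K j m))
        = (\<Sum>i<n. real i * x i * (\<Sum>j<n. \<mu> (i+j) * K j m)) + real n * (\<Sum>j<n. \<mu> (n+j) * K j m)"
      by (simp add: x_def)
    also have "(\<Sum>i<n. real i * x i * (\<Sum>j<n. \<mu> (i+j) * K j m)) = (\<Sum>i<n. if i = m then real i * x i else 0)"
      using KR mn by (intro sum.cong refl) auto
    also have "\<dots> = - real m * q m" using mn by (simp add: x_def n_def)
    also have "(\<Sum>j<n. \<mu> (n+j) * K j m) = q m"
      unfolding q_def w_def using mn by (auto intro!: sum.cong simp: KS mult_ac)
    finally have "S = - real m * q m + real n * q m - c * (P * u m)" by simp
    with S1 show ?thesis by (simp add: n_def algebra_simps)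
  qed
  have fin: "2 * b - c * a^2 = (s - \<alpha> - 1) * a - u m * P"
    using I2 uq unfolding P_def by (simp add: algebra_simps)
  have "c * (\<alpha> - s) * a + c * (2 * b - c * a^2) = - c * a - c * P * u m"
    unfolding fin by (simp add: algebra_simps)
  also have "\<dots> = K m m * h - real n * (real n + \<alpha>)"
    using I1 I3 by (simp add: algebra_simps)
  finally show ?thesis unfolding h_def hh by (simp add: algebra_simps)
qed



definition gg :: "real \<Rightarrow> nat \<Rightarrow> real \<Rightarrow> real" where
  "gg \<alpha> k x = x powr (\<alpha> + real k) * exp (- x)"

lemma gg_nonneg: "gg \<alpha> k x \<ge> 0"
  by (simp add: gg_def)

lemma gg_cont:
  assumes "\<alpha> > 0" "a \<ge> 0"
  shows "continuous_on {a..b} (gg \<alpha> k)"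
  unfolding gg_def using assms
  by (intro continuous_intros continuous_on_powr') auto

lemma gg_integrable_Gamma:
  assumes "\<alpha> > 0"
  shows "set_integrable lborel {0..} (gg \<alpha> k)"
    "(LBINT x:{0..}. gg \<alpha> k x) = Gamma (\<alpha> + real k + 1)"
proof -
  have "((\<lambda>t. t powr (\<alpha> + real k + 1 - 1) / exp t) has_integral Gamma (\<alpha> + real k + 1)) {0..}"
    by (rule Gamma_integral_real) (use assms in auto)
  moreover have "(\<lambda>t. t powr (\<alpha> + real k + 1 - 1) / exp t) = gg \<alpha> k"
    by (rule ext) (simp add: gg_def exp_minus divide_inverse)
  ultimately have hi: "(gg \<alpha> k has_integral Gamma (\<alpha> + real k + 1)) {0..}"
    by simp
  then have "gg \<alpha> k absolutely_integrable_on {0..}"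
    by (intro nonnegative_absolutely_integrable_1) (auto simp: gg_nonneg)
  then have "integrable lebesgue (\<lambda>x. indicator {0..} x *\<^sub>R gg \<alpha> k x)"
    by (simp add: set_integrable_def)
  then show si: "set_integrable lborel {0..} (gg \<alpha> k)"
    unfolding set_integrable_def
    by (subst (asm) integrable_completion) (auto simp: gg_def)
  show "(LBINT x:{0..}. gg \<alpha> k x) = Gamma (\<alpha> + real k + 1)"
    using set_borel_integral_eq_integral(2)[OF si] hi by (simp add: integral_unique)
qed

lemma gg_integrable_Icc:
  assumes "\<alpha> > 0"
  shows "set_integrable lborel {0..s} (gg \<alpha> k)"
  by (rule set_integrable_subset[OF gg_integrable_Gamma(1)[OF assms]]) auto

definition Phi :: "real \<Rightarrow> nat \<Rightarrow> real \<Rightarrow> real" where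
  "Phi \<alpha> k s = integral {0..s} (gg \<alpha> k)"

lemma moment_eq:
  assumes "\<alpha> > 0" "s \<ge> 0"
  shows "moment \<alpha> A B s k = (A + B) * Gamma (\<alpha> + real k + 1) - B * Phi \<alpha> k s"
proof -
  have I1: "integrable lborel (\<lambda>x. indicator {0..} x * gg \<alpha> k x)"
    using gg_integrable_Gamma(1)[OF assms(1)] by (simp add: set_integrable_def)
  have I2: "integrable lborel (\<lambda>x. indicator {0..s} x * gg \<alpha> k x)"
    using gg_integrable_Icc[OF assms(1)] by (simp add: set_integrable_def)
  have pt: "indicator {0..} x * (x ^ k * weight \<alpha> A B s x) =
      (A + B) * (indicator {0..} x * gg \<alpha> k x) - B * (indicator {0..s} x * gg \<alpha> k x)" for x :: real
  proof (cases "x \<ge> 0")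
    case True
    have "x ^ k * x powr \<alpha> = x powr (\<alpha> + real k)"
    proof (cases "x = 0")
      case False
      then have "x > 0" using True by simp
      then show ?thesis by (simp add: powr_add powr_realpow)
    qed (use assms in auto)
    then have e: "x ^ k * weight \<alpha> A B s x = gg \<alpha> k x * (A + B * heaviside (x - s))"
      unfolding weight_def gg_def by (metis mult.assoc mult.commute)
    show ?thesis using True
      by (auto simp: e heaviside_def indicator_def algebra_simps)
  qed (auto simp: indicator_def)
  have "moment \<alpha> A B s k = integral\<^sup>L lborel (\<lambda>x. indicator {0..} x * (x ^ k * weight \<alpha> A B s x))"
    by (simp add: moment_def set_lebesgue_integral_def)
  also have "\<dots> = integral\<^sup>L lborel (\<lambda>x. (A + B) * (indicator {0..} x * gg \<alpha> k x) - B * (indicator {0..s} x * gg \<alpha> k x))"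
    by (simp add: pt)
  also have "\<dots> = (A + B) * integral\<^sup>L lborel (\<lambda>x. indicator {0..} x * gg \<alpha> k x) - B * integral\<^sup>L lborel (\<lambda>x. indicator {0..s} x * gg \<alpha> k x)"
    using I1 I2 by simp
  also have "integral\<^sup>L lborel (\<lambda>x. indicator {0..} x * gg \<alpha> k x) = Gamma (\<alpha> + real k + 1)"
    using gg_integrable_Gamma(2)[OF assms(1)] by (simp add: set_lebesgue_integral_def)
  also have "integral\<^sup>L lborel (\<lambda>x. indicator {0..s} x * gg \<alpha> k x) = Phi \<alpha> k s"
    using set_borel_integral_eq_integral(2)[OF gg_integrable_Icc[OF assms(1)]]
    by (simp add: set_lebesgue_integral_def Phi_def)
  finally show ?thesis .
qed

lemma moment_integrable:
  assumes "\<alpha> > 0" "s \<ge> 0"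
  shows "integrable lborel (\<lambda>x. indicator {0..} x * (x ^ k * weight \<alpha> A B s x))"
proof -
  have I1: "integrable lborel (\<lambda>x. indicator {0..} x * gg \<alpha> k x)"
    using gg_integrable_Gamma(1)[OF assms(1)] by (simp add: set_integrable_def)
  have I2: "integrable lborel (\<lambda>x. indicator {0..s} x * gg \<alpha> k x)"
    using gg_integrable_Icc[OF assms(1)] by (simp add: set_integrable_def)
  have pt: "indicator {0..} x * (x ^ k * weight \<alpha> A B s x) =
      (A + B) * (indicator {0..} x * gg \<alpha> k x) - B * (indicator {0..s} x * gg \<alpha> k x)" for x :: real
  proof (cases "x \<ge> 0")
    case True
    have "x ^ k * x powr \<alpha> = x powr (\<alpha> + real k)"
    proof (cases "x = 0")
      case False
      then have "x > 0" using True by simp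
      then show ?thesis by (simp add: powr_add powr_realpow)
    qed (use assms in auto)
    then have e: "x ^ k * weight \<alpha> A B s x = gg \<alpha> k x * (A + B * heaviside (x - s))"
      unfolding weight_def gg_def by (metis mult.assoc mult.commute)
    show ?thesis using True
      by (auto simp: e heaviside_def indicator_def algebra_simps)
  qed (auto simp: indicator_def)
  show ?thesis unfolding pt using I1 I2 by simp
qed

lemma Phi_deriv:
  assumes "\<alpha> > 0" "s > 0"
  shows "(Phi \<alpha> k has_real_derivative gg \<alpha> k s) (at s)"
proof -
  have "((\<lambda>x. integral {0..x} (gg \<alpha> k)) has_real_derivative gg \<alpha> k s) (at s within {0..s+1})"
    by (rule integral_has_real_derivative[OF gg_cont]) (use assms in auto)
  moreover have "at s within {0..s+1} = at s"
    by (rule at_within_Icc_at) (use assms in auto)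
  ultimately show ?thesis by (simp add: Phi_def[abs_def])
qed

lemma Phi_shift:
  assumes "\<alpha> > 0" "s \<ge> 0"
  shows "Phi \<alpha> (Suc k) s = (\<alpha> + real k + 1) * Phi \<alpha> k s - s powr (\<alpha> + real k + 1) * exp (- s)"
proof -
  define F where "F x = x powr (\<alpha> + real k + 1) * exp (- x)" for x :: real
  define F' where "F' x = (\<alpha> + real k + 1) * gg \<alpha> k x - gg \<alpha> (Suc k) x" for x :: real
  have "(F' has_integral (F s - F 0)) {0..s}"
  proof (rule fundamental_theorem_of_calculus_interior)
    show "continuous_on {0..s} F"
      unfolding F_def using assms by (intro continuous_intros continuous_on_powr') auto
    fix x assume x: "x \<in> {0<..<s}"
    then have xp: "x > 0" by simp
    have "(F has_real_derivative ((\<alpha> + real k + 1) * x powr (\<alpha> + real k + 1 - 1) * exp (- x) + x powr (\<alpha> + real k + 1) * (exp (- x) * (- 1)))) (at x)"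
      unfolding F_def
      by (intro derivative_eq_intros has_real_derivative_powr[OF xp]) (use xp in auto)
    moreover have "(\<alpha> + real k + 1) * x powr (\<alpha> + real k + 1 - 1) * exp (- x) + x powr (\<alpha> + real k + 1) * (exp (- x) * (- 1)) = F' x"
      unfolding F'_def gg_def by (simp add: algebra_simps)
    ultimately show "(F has_vector_derivative F' x) (at x)"
      by (simp add: has_real_derivative_iff_has_vector_derivative)
  qed (use assms in auto)
  then have "integral {0..s} F' = F s" by (simp add: integral_unique F_def)
  moreover have "integral {0..s} F' = (\<alpha> + real k + 1) * Phi \<alpha> k s - Phi \<alpha> (Suc k) s"
    unfolding F'_def Phi_def
    using assms by (simp add: integral_diff integrable_continuous_interval gg_cont)
  ultimately show ?thesis by (simp add: F_def)
qed

lemma moment_shift: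
  assumes "\<alpha> > 0" "s \<ge> 0"
  shows "moment \<alpha> A B s (Suc k) = (real k + \<alpha> + 1) * moment \<alpha> A B s k + B * s powr (\<alpha> + real k + 1) * exp (- s)"
proof -
  have "Gamma (\<alpha> + real (Suc k) + 1) = (\<alpha> + real k + 1) * Gamma (\<alpha> + real k + 1)"
  proof -
    have "\<alpha> + real k + 1 \<notin> \<int>\<^sub>\<le>\<^sub>0" using assms nonpos_Ints_nonpos by force
    then show ?thesis using Gamma_plus1[of "\<alpha> + real k + 1"] by (simp add: add_ac)
  qed
  then show ?thesis
    unfolding moment_eq[OF assms] Phi_shift[OF assms] by (simp add: algebra_simps)
qed

lemma moment_deriv:
  assumes "\<alpha> > 0" "s > 0"
  shows "((\<lambda>u. moment \<alpha> A B u k) has_real_derivative (- B * s powr \<alpha> * exp (- s)) * s ^ k) (at s)"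
proof -
  have "((\<lambda>u. (A + B) * Gamma (\<alpha> + real k + 1) - B * Phi \<alpha> k u) has_real_derivative 0 - B * gg \<alpha> k s) (at s)"
    by (intro DERIV_diff DERIV_const DERIV_cmult Phi_deriv[OF assms])
  then have "((\<lambda>u. (A + B) * Gamma (\<alpha> + real k + 1) - B * Phi \<alpha> k u) has_real_derivative - B * gg \<alpha> k s) (at s)"
    by simp
  then have "((\<lambda>u. moment \<alpha> A B u k) has_real_derivative - B * gg \<alpha> k s) (at s)"
    by (rule has_field_derivative_transform_within_open[where S="{0<..}"])
       (use assms moment_eq in auto)
  moreover have "gg \<alpha> k s = s powr \<alpha> * exp (- s) * s ^ k"
    using assms by (simp add: gg_def powr_add powr_realpow mult_ac)
  ultimately show ?thesis by (simp add: algebra_simps)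
qed



lemma schur_quadform:
  assumes D: "det (hank \<mu> m) \<noteq> 0"
  defines "y \<equiv> (\<lambda>i. if i = m then 1 else - (\<Sum>j<m. Kinv \<mu> m i j * \<mu> (m+j)))"
  shows "\<mu> (2*m) - (\<Sum>i<m. \<Sum>j<m. \<mu> (m+i) * Kinv \<mu> m i j * \<mu> (m+j))
       = (\<Sum>i<Suc m. \<Sum>j<Suc m. y i * y j * \<mu> (i+j))"
proof -
  define q where "q i = (\<Sum>j<m. Kinv \<mu> m i j * \<mu> (m+j))" for i
  have Mq: "(\<Sum>j<m. \<mu> (i+j) * q j) = \<mu> (m+i)" if "i < m" for i
  proof -
    have "(\<Sum>j<m. \<mu> (i+j) * q j) = (\<Sum>l<m. (\<Sum>j<m. \<mu> (i+j) * Kinv \<mu> m j l) * \<mu> (m+l))"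
      unfolding q_def by (simp add: sum_distrib_left sum_distrib_right mult_ac) (rule sum.swap)
    also have "\<dots> = (\<Sum>l<m. (if i = l then 1 else 0) * \<mu> (m+l))"
      using Kinv_right[OF D that] by (intro sum.cong refl) simp
    also have "\<dots> = \<mu> (m+i)" using that by (simp add: if_distrib[of "\<lambda>x. x * _"] cong: if_cong)
    finally show ?thesis .
  qed
  define X where "X i = (\<Sum>j<Suc m. y j * \<mu> (i+j))" for i
  have Xi: "X i = \<mu> (i+m) - (\<Sum>j<m. q j * \<mu> (i+j))" for i
    unfolding X_def y_def q_def by (simp add: sum_negf)
  have X0: "X i = 0" if "i < m" for i
    using Mq[OF that] Xi[of i] by (simp add: mult_ac add.commute)
  have "(\<Sum>i<Suc m. \<Sum>j<Suc m. y i * y j * \<mu> (i+j)) = (\<Sum>i<Suc m. y i * X i)"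
    unfolding X_def by (simp add: sum_distrib_left distrib_left mult_ac)
  also have "\<dots> = (\<Sum>i<m. y i * X i) + y m * X m" by simp
  also have "(\<Sum>i<m. y i * X i) = 0" by (rule sum.neutral) (simp add: X0)
  also have "y m * X m = \<mu> (2*m) - (\<Sum>j<m. q j * \<mu> (m+j))"
    by (simp add: y_def Xi mult_2)
  also have "(\<Sum>j<m. q j * \<mu> (m+j)) = (\<Sum>i<m. \<Sum>j<m. \<mu> (m+i) * Kinv \<mu> m i j * \<mu> (m+j))"
    unfolding q_def by (simp add: sum_distrib_left sum_distrib_right mult_ac)
  finally show ?thesis by simp
qed

lemma quad_expand:
  fixes x :: real
  shows "ind * ((\<Sum>i\<in>S. y i * x^i)^2 * w) = (\<Sum>i\<in>S. \<Sum>j\<in>S. y i * y j * (ind * (x^(i+j) * w)))"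
  by (simp add: power2_eq_square sum_product sum_distrib_left sum_distrib_right power_add mult_ac)

lemma quadform_integral:
  assumes "\<alpha> > 0" "s \<ge> 0"
  shows "(\<Sum>i<N. \<Sum>j<N. y i * y j * moment \<alpha> A B s (i+j)) =
     integral\<^sup>L lborel (\<lambda>x. indicator {0..} x * ((\<Sum>i<N. y i * x^i)^2 * weight \<alpha> A B s x))"
proof -
  have I: "integrable lborel (\<lambda>x. indicator {0..} x * (x ^ k * weight \<alpha> A B s x))" for k
    by (rule moment_integrable[OF assms])
  have "(\<lambda>x. indicator {0..} x * ((\<Sum>i<N. y i * x^i)^2 * weight \<alpha> A B s x)) =
        (\<lambda>x. \<Sum>i<N. \<Sum>j<N. y i * y j * (indicator {0..} x * (x ^ (i+j) * weight \<alpha> A B s x)))"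
    by (rule ext, rule quad_expand)
  then have "integral\<^sup>L lborel (\<lambda>x. indicator {0..} x * ((\<Sum>i<N. y i * x^i)^2 * weight \<alpha> A B s x)) =
     (\<Sum>i<N. \<Sum>j<N. y i * y j * integral\<^sup>L lborel (\<lambda>x. indicator {0..} x * (x ^ (i+j) * weight \<alpha> A B s x)))"
    using I by (simp add: integral_sum integrable_sum)
  then show ?thesis by (simp add: moment_def set_lebesgue_integral_def)
qed

lemma poly_ge_one:
  fixes y :: "nat \<Rightarrow> real"
  assumes "y N = 1" "x \<ge> 1 + (\<Sum>i<N. \<bar>y i\<bar>)"
  shows "(\<Sum>i<Suc N. y i * x^i) \<ge> 1"
proof (cases N)
  case 0
  then show ?thesis using assms by simp
next
  case (Suc M)
  have x1: "x \<ge> 1" using assms(2) by (smt (verit) sum_nonneg abs_ge_zero)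
  have "(\<Sum>i<N. - (y i * x^i)) \<le> (\<Sum>i<N. \<bar>y i\<bar> * x^M)"
  proof (rule sum_mono)
    fix i assume "i \<in> {..<N}"
    then have "i \<le> M" using Suc by simp
    then have "x^i \<le> x^M" using x1 by (simp add: power_increasing)
    moreover have "- (y i * x^i) \<le> \<bar>y i\<bar> * x^i"
    proof -
      have "\<bar>y i * x^i\<bar> = \<bar>y i\<bar> * x^i" using x1 by (simp add: abs_mult)
      then show ?thesis using abs_ge_minus_self[of "y i * x^i"] by linarith
    qed
    ultimately show "- (y i * x^i) \<le> \<bar>y i\<bar> * x^M"
      by (smt (verit) abs_ge_zero mult_left_mono)
  qed
  also have "\<dots> = (\<Sum>i<N. \<bar>y i\<bar>) * x^M" by (simp add: sum_distrib_right)
  also have "\<dots> \<le> (x - 1) * x^M" using assms(2) x1 by (intro mult_right_mono) auto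
  finally have "- (\<Sum>i<N. y i * x^i) \<le> (x - 1) * x^M" by (simp add: sum_negf)
  moreover have "(\<Sum>i<Suc N. y i * x^i) = (\<Sum>i<N. y i * x^i) + x^N" using assms(1) by simp
  moreover have "x^N = x * x^M" using Suc by simp
  moreover have "x^M \<ge> 1" using x1 by simp
  ultimately show ?thesis using assms(1) by (simp add: algebra_simps)
qed

lemma quadform_pos:
  assumes "\<alpha> > 0" "A \<ge> 0" "B > 0" "s \<ge> 0" "y N = 1"
  shows "(\<Sum>i<Suc N. \<Sum>j<Suc N. y i * y j * moment \<alpha> A B s (i+j)) > 0"
proof -
  define X where "X = max (s + 1) (1 + (\<Sum>i<N. \<bar>y i\<bar>))"
  define C where "C = B * exp (- (X + 1))"
  define f where "f x = indicator {0..} x * ((\<Sum>i<Suc N. y i * x^i)^2 * weight \<alpha> A B s x)" for x :: real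
  have Cpos: "C > 0" using assms by (simp add: C_def)
  have X1: "X \<ge> 1" unfolding X_def using assms by auto
  have fint: "integrable lborel f"
  proof -
    have "integrable lborel (\<lambda>x. \<Sum>i<Suc N. \<Sum>j<Suc N. y i * y j * (indicator {0..} x * (x ^ (i+j) * weight \<alpha> A B s x)))"
      using moment_integrable[OF assms(1,4)] by (intro Bochner_Integration.integrable_sum integrable_mult_right) auto
    moreover have "(\<lambda>x. \<Sum>i<Suc N. \<Sum>j<Suc N. y i * y j * (indicator {0..} x * (x ^ (i+j) * weight \<alpha> A B s x))) = f"
      unfolding f_def by (rule ext, rule quad_expand[symmetric])
    ultimately show ?thesis by simp
  qed
  have gint: "integrable lborel (\<lambda>x. C * indicator {X..X+1} x)"
    by (intro integrable_mult_right integrable_real_indicator) auto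
  have le: "C * indicator {X..X+1} x \<le> f x" for x
  proof (cases "x \<in> {X..X+1}")
    case True
    then have xX: "X \<le> x" "x \<le> X + 1" by auto
    have x0: "x \<ge> 0" "x \<ge> 1" "x > s" using xX X1 unfolding X_def by auto
    have P1: "(\<Sum>i<Suc N. y i * x^i) \<ge> 1"
      by (rule poly_ge_one[of y N, OF assms(5)]) (use xX in \<open>auto simp: X_def\<close>)
    then have P2: "(\<Sum>i<Suc N. y i * x^i)^2 \<ge> 1" by (smt (verit) one_le_power)
    have w: "weight \<alpha> A B s x \<ge> C"
    proof -
      have "x powr \<alpha> \<ge> 1" using x0 assms by (intro ge_one_powr_ge_zero) auto
      moreover have "exp (- x) \<ge> exp (- (X + 1))" using xX by simp
      moreover have "heaviside (x - s) = 1" using x0 by (simp add: heaviside_def)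
      ultimately have "x powr \<alpha> * exp (- x) \<ge> 1 * exp (- (X + 1))"
        by (intro mult_mono) auto
      moreover have "A + B \<ge> B" using assms by simp
      ultimately have "x powr \<alpha> * exp (- x) * (A + B) \<ge> exp (- (X + 1)) * B"
        using assms by (intro mult_mono) auto
      then show ?thesis using \<open>heaviside (x - s) = 1\<close> by (simp add: weight_def C_def mult_ac)
    qed
    have "C \<le> (\<Sum>i<Suc N. y i * x^i)^2 * weight \<alpha> A B s x"
      using P2 w Cpos by (smt (verit) mult_mono mult_cancel_right1)
    then show ?thesis using True x0 by (simp add: f_def)
  next
    case False
    have "weight \<alpha> A B s x \<ge> 0 \<or> x < 0"
      using assms by (auto simp: weight_def heaviside_def)
    then have "f x \<ge> 0" unfolding f_def by (auto simp: indicator_def)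
    then show ?thesis using False by simp
  qed
  have "integral\<^sup>L lborel (\<lambda>x. C * indicator {X..X+1} x) \<le> integral\<^sup>L lborel f"
    by (rule integral_mono[OF gint fint le])
  moreover have "integral\<^sup>L lborel (\<lambda>x. C * indicator {X..X+1} x) = C"
    by simp
  ultimately have "integral\<^sup>L lborel f > 0" using Cpos by simp
  moreover have "(\<Sum>i<Suc N. \<Sum>j<Suc N. y i * y j * moment \<alpha> A B s (i+j)) = integral\<^sup>L lborel f"
    unfolding f_def by (rule quadform_integral[OF assms(1,4)])
  ultimately show ?thesis by linarith
qed

lemma hank_pos:
  assumes "\<alpha> > 0" "A \<ge> 0" "B > 0" "s \<ge> 0"
  shows "det (hank (moment \<alpha> A B s) m) > 0"
proof (induction m)
  case 0
  then show ?case by (simp add: det_dim_zero)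
next
  case (Suc m)
  let ?\<mu> = "moment \<alpha> A B s"
  have D: "det (hank ?\<mu> m) \<noteq> 0" using Suc by simp
  define y where "y = (\<lambda>i. if i = m then 1 else - (\<Sum>j<m. Kinv ?\<mu> m i j * ?\<mu> (m+j)))"
  have "det (hank ?\<mu> (Suc m)) = det (hank ?\<mu> m) * (\<Sum>i<Suc m. \<Sum>j<Suc m. y i * y j * ?\<mu> (i+j))"
    unfolding schur_hank[OF D] schur_quadform[OF D] y_def ..
  moreover have "(\<Sum>i<Suc m. \<Sum>j<Suc m. y i * y j * ?\<mu> (i+j)) > 0"
    by (rule quadform_pos[OF assms]) (simp add: y_def)
  ultimately show ?case using Suc by simp
qed



lemma hankelD_eq: "hankelD \<alpha> A B n s = det (hank (moment \<alpha> A B s) n)"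
  by (simp add: hankelD_def hank_def)

lemma cofactor_Kinv:
  assumes "det (hank \<mu> n) \<noteq> 0"
  shows "cofactor (hank \<mu> n) i j = det (hank \<mu> n) * Kinv \<mu> n j i"
  using assms by (simp add: Kinv_def)

lemma D_deriv:
  assumes "\<alpha> > 0" "A \<ge> 0" "B > 0" "s > 0"
  defines "\<mu> \<equiv> moment \<alpha> A B s"
  shows "((\<lambda>u. det (hank (moment \<alpha> A B u) n)) has_real_derivative
     det (hank \<mu> n) * ((- B * s powr \<alpha> * exp (- s)) * (\<Sum>i<n. \<Sum>j<n. s^i * Kinv \<mu> n i j * s^j))) (at s)"
proof -
  define \<phi> where "\<phi> = - B * s powr \<alpha> * exp (- s)"
  have J: "((\<lambda>u. det (mat n n (\<lambda>(i,j). moment \<alpha> A B u (i+j)))) has_real_derivative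
      (\<Sum>i<n. \<Sum>j<n. (\<phi> * s^(i+j)) * cofactor (mat n n (\<lambda>(i,j). moment \<alpha> A B s (i+j))) i j)) (at s)"
    by (rule jacobi_det[where f="\<lambda>u i j. moment \<alpha> A B u (i+j)"]) (unfold \<phi>_def, rule moment_deriv, use assms in auto)
  have Dpos: "det (hank \<mu> n) \<noteq> 0" using hank_pos[of \<alpha> A B s n] assms by simp
  have "(\<Sum>i<n. \<Sum>j<n. (\<phi> * s^(i+j)) * cofactor (hank \<mu> n) i j)
      = det (hank \<mu> n) * \<phi> * (\<Sum>i<n. \<Sum>j<n. s^i * Kinv \<mu> n j i * s^j)"
    by (simp add: cofactor_Kinv[OF Dpos] sum_distrib_left power_add mult_ac)
  also have "(\<Sum>i<n. \<Sum>j<n. s^i * Kinv \<mu> n j i * s^j) = (\<Sum>i<n. \<Sum>j<n. s^i * Kinv \<mu> n i j * s^j)"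
    by (subst sum.swap) (simp add: mult_ac)
  finally have "(\<Sum>i<n. \<Sum>j<n. (\<phi> * s^(i+j)) * cofactor (hank \<mu> n) i j) =
      det (hank \<mu> n) * (\<phi> * (\<Sum>i<n. \<Sum>j<n. s^i * Kinv \<mu> n i j * s^j))" by simp
  then show ?thesis using J unfolding hank_def \<mu>_def \<phi>_def by simp
qed

lemma lnD_deriv:
  assumes "\<alpha> > 0" "A \<ge> 0" "B > 0" "s > 0"
  defines "\<mu> \<equiv> moment \<alpha> A B s"
  shows "((\<lambda>u. ln (hankelD \<alpha> A B n u)) has_real_derivative
     (- B * s powr \<alpha> * exp (- s)) * (\<Sum>i<n. \<Sum>j<n. s^i * Kinv \<mu> n i j * s^j)) (at s)"
proof -
  have Dpos: "det (hank (moment \<alpha> A B s) n) > 0" using hank_pos[of \<alpha> A B s n] assms by simp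
  have "((\<lambda>u. ln (det (hank (moment \<alpha> A B u) n))) has_real_derivative
      1 / det (hank (moment \<alpha> A B s) n) * (det (hank (moment \<alpha> A B s) n) * ((- B * s powr \<alpha> * exp (- s)) * (\<Sum>i<n. \<Sum>j<n. s^i * Kinv (moment \<alpha> A B s) n i j * s^j)))) (at s)"
    by (rule DERIV_chain2[OF DERIV_ln_divide[OF Dpos] D_deriv[OF assms(1-4)]])
  then show ?thesis using Dpos by (simp add: hankelD_eq[abs_def] \<mu>_def)
qed


lemma mat_delete_hank:
  assumes "j < n" "i < n"
  shows "mat_delete (hank \<mu> n) j i = mat (n-1) (n-1) (\<lambda>(p,q). \<mu> ((if p < j then p else Suc p) + (if q < i then q else Suc q)))"
  unfolding mat_delete_def using assms by (intro eq_matI) (auto simp: hank_def)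

lemma Kinv_has_deriv:
  assumes "\<alpha> > 0" "A \<ge> 0" "B > 0" "t > 0" "i < n" "j < n"
  shows "\<exists>d. ((\<lambda>s. Kinv (moment \<alpha> A B s) n i j) has_real_derivative d) (at t)"
proof -
  define f where "f u p q = moment \<alpha> A B u ((if p < j then p else Suc p) + (if q < i then q else Suc q))" for u p q
  have cof: "cofactor (hank (moment \<alpha> A B u) n) j i = (-1)^(j+i) * det (mat (n-1) (n-1) (\<lambda>(p,q). f u p q))" for u
    unfolding cofactor_def mat_delete_hank[OF assms(6,5)] f_def by simp
  have "((\<lambda>u. det (mat (n-1) (n-1) (\<lambda>(p,q). f u p q))) has_real_derivative
      (\<Sum>p<n-1. \<Sum>q<n-1. ((- B * t powr \<alpha> * exp (- t)) * t ^ ((if p < j then p else Suc p) + (if q < i then q else Suc q))) * cofactor (mat (n-1) (n-1) (\<lambda>(p,q). f t p q)) p q)) (at t)"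
    by (rule jacobi_det) (unfold f_def, rule moment_deriv, use assms in auto)
  then have c: "((\<lambda>u. cofactor (hank (moment \<alpha> A B u) n) j i) has_real_derivative
      (-1)^(j+i) * (\<Sum>p<n-1. \<Sum>q<n-1. ((- B * t powr \<alpha> * exp (- t)) * t ^ ((if p < j then p else Suc p) + (if q < i then q else Suc q))) * cofactor (mat (n-1) (n-1) (\<lambda>(p,q). f t p q)) p q)) (at t)"
    unfolding cof by (rule DERIV_cmult)
  have Dpos: "det (hank (moment \<alpha> A B t) n) > 0" using hank_pos[of \<alpha> A B t n] assms by simp
  show ?thesis
    unfolding Kinv_def
    by (rule exI, rule DERIV_divide[OF c D_deriv[OF assms(1-4)]]) (use Dpos in simp)
qed


lemma Kinv_deriv:
  assumes "\<alpha> > 0" "A \<ge> 0" "B > 0" "t > 0" "i < n" "p < n"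
  defines "\<mu> \<equiv> moment \<alpha> A B t"
  defines "\<phi> \<equiv> - B * t powr \<alpha> * exp (- t)"
  shows "((\<lambda>s. Kinv (moment \<alpha> A B s) n i p) has_real_derivative
      - \<phi> * (\<Sum>l<n. Kinv \<mu> n i l * t^l) * (\<Sum>l<n. Kinv \<mu> n p l * t^l)) (at t)"
proof -
  define K where "K = Kinv \<mu> n"
  define Kd where "Kd i j = (SOME d. ((\<lambda>s. Kinv (moment \<alpha> A B s) n i j) has_real_derivative d) (at t))" for i j
  have Kd: "((\<lambda>s. Kinv (moment \<alpha> A B s) n i j) has_real_derivative Kd i j) (at t)" if "i < n" "j < n" for i j
    unfolding Kd_def by (rule someI_ex, rule Kinv_has_deriv) (use assms that in auto)
  have Dne: "det (hank \<mu> n) \<noteq> 0" using hank_pos[of \<alpha> A B t n] assms by simp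
  have KR: "(\<Sum>l<n. \<mu> (i+l) * K l j) = (if i = j then 1 else 0)" if "i < n" "j < n" for i j
    unfolding K_def by (rule Kinv_right[OF Dne that])
  have KS: "K i j = K j i" if "i < n" "j < n" for i j
    unfolding K_def by (rule Kinv_sym[OF Dne that])
  (* differentiate K * M = I *)
  have eq0: "(\<Sum>l<n. Kd i l * \<mu> (l+j)) = - \<phi> * (\<Sum>l<n. K i l * t^(l+j))" if "j < n" for j
  proof -
    define G where "G s = (\<Sum>l<n. Kinv (moment \<alpha> A B s) n i l * moment \<alpha> A B s (l+j))" for s
    have G1: "((\<lambda>s. G s) has_real_derivative (\<Sum>l<n. Kd i l * \<mu> (l+j) + K i l * (\<phi> * t^(l+j)))) (at t)"
      unfolding G_def
    proof (rule DERIV_sum)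
      fix l assume "l \<in> {..<n}"
      then have l: "l < n" by simp
      show "((\<lambda>s. Kinv (moment \<alpha> A B s) n i l * moment \<alpha> A B s (l+j)) has_real_derivative Kd i l * \<mu> (l+j) + K i l * (\<phi> * t^(l+j))) (at t)"
        using DERIV_mult[OF Kd[OF assms(5) l] moment_deriv[OF assms(1,4), of A B "l+j"]]
        unfolding K_def \<mu>_def \<phi>_def by (simp add: mult_ac)
    qed
    have G2: "((\<lambda>s. G s) has_real_derivative 0) (at t)"
    proof (rule has_field_derivative_transform_within_open[OF DERIV_const[of "if i = j then 1 else 0"], where S="{0<..}"])
      fix s :: real assume "s \<in> {0<..}"
      then have "det (hank (moment \<alpha> A B s) n) \<noteq> 0" using hank_pos[of \<alpha> A B s n] assms by simp
      then show "(if i = j then 1 else 0) = G s"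
        unfolding G_def using Kinv_left[of "moment \<alpha> A B s" n i j] assms that by simp
    qed (use assms in auto)
    have "(\<Sum>l<n. Kd i l * \<mu> (l+j) + K i l * (\<phi> * t^(l+j))) = 0"
      using DERIV_unique[OF G1 G2] .
    then show ?thesis by (simp add: sum.distrib sum_distrib_left sum_negf mult_ac add_eq_0_iff)
  qed
  have "Kd i p = (\<Sum>l<n. Kd i l * (if l = p then 1 else 0))"
    using assms by (simp add: if_distrib[of "\<lambda>x. _ * x"] cong: if_cong)
  also have "\<dots> = (\<Sum>l<n. Kd i l * (\<Sum>j<n. \<mu> (l+j) * K j p))"
    using KR assms(6) by (intro sum.cong refl) simp
  also have "\<dots> = (\<Sum>j<n. (\<Sum>l<n. Kd i l * \<mu> (l+j)) * K j p)"
    by (simp add: sum_distrib_left sum_distrib_right mult_ac) (rule sum.swap)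
  also have "\<dots> = (\<Sum>j<n. (- \<phi> * (\<Sum>l<n. K i l * t^(l+j))) * K j p)"
    using eq0 by (intro sum.cong refl) simp
  also have "\<dots> = - \<phi> * (\<Sum>j<n. \<Sum>l<n. (K i l * t^l) * (K p j * t^j))"
  proof -
    have "(\<Sum>j<n. (- \<phi> * (\<Sum>l<n. K i l * t^(l+j))) * K j p) = (\<Sum>j<n. - \<phi> * (\<Sum>l<n. (K i l * t^l) * (K p j * t^j)))"
    proof (intro sum.cong refl)
      fix j assume "j \<in> {..<n}"
      then have "K j p = K p j" using KS assms(6) by simp
      then show "(- \<phi> * (\<Sum>l<n. K i l * t^(l+j))) * K j p = - \<phi> * (\<Sum>l<n. (K i l * t^l) * (K p j * t^j))"
        by (simp add: sum_distrib_left sum_distrib_right power_add mult_ac)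
    qed
    then show ?thesis by (simp add: sum_distrib_left)
  qed
  also have "\<dots> = - \<phi> * (\<Sum>l<n. K i l * t^l) * (\<Sum>j<n. K p j * t^j)"
    by (subst sum.swap) (simp add: sum_product mult.assoc)
  finally have "Kd i p = - \<phi> * (\<Sum>l<n. K i l * t^l) * (\<Sum>j<n. K p j * t^j)" .
  then show ?thesis using Kd[OF assms(5,6)] unfolding K_def by simp
qed


lemma pow_pred_mult: "real i * t ^ (i - 1) * t = real i * (t::real) ^ i"
  by (cases i) auto

lemma a_deriv:
  fixes n :: nat
  assumes "\<alpha> > 0" "A \<ge> 0" "B > 0" "t > 0"
  defines "\<mu> \<equiv> moment \<alpha> A B t"
  defines "\<phi> \<equiv> - B * t powr \<alpha> * exp (- t)"
  defines "a \<equiv> (\<Sum>i<n. \<Sum>j<n. t^i * Kinv \<mu> n i j * t^j)"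
  defines "b \<equiv> (\<Sum>i<n. \<Sum>j<n. real i * t^i * Kinv \<mu> n i j * t^j)"
  shows "((\<lambda>s. \<Sum>i<n. \<Sum>j<n. s^i * Kinv (moment \<alpha> A B s) n i j * s^j) has_real_derivative
      (2 * b - t * \<phi> * a^2) / t) (at t)"
proof -
  define K where "K = Kinv \<mu> n"
  define u where "u i = (\<Sum>l<n. K i l * t^l)" for i
  define Kd where "Kd i j = - \<phi> * u i * u j" for i j
  have Dne: "det (hank \<mu> n) \<noteq> 0" using hank_pos[of \<alpha> A B t n] assms by simp
  have KS: "K i j = K j i" if "i < n" "j < n" for i j
    unfolding K_def by (rule Kinv_sym[OF Dne that])
  define D0 where "D0 = (\<Sum>i<n. \<Sum>j<n. (real i * t^(i-1)) * K i j * t^j + t^i * Kd i j * t^j + t^i * K i j * (real j * t^(j-1)))"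
  have der: "((\<lambda>s. \<Sum>i<n. \<Sum>j<n. s^i * Kinv (moment \<alpha> A B s) n i j * s^j) has_real_derivative D0) (at t)"
    unfolding D0_def
  proof (intro DERIV_sum)
    fix i j assume ij: "i \<in> {..<n}" "j \<in> {..<n}"
    have kd: "((\<lambda>s. Kinv (moment \<alpha> A B s) n i j) has_real_derivative Kd i j) (at t)"
      using Kinv_deriv[OF assms(1-4), of i n j] ij by (simp add: K_def Kd_def u_def \<mu>_def \<phi>_def)
    show "((\<lambda>s. s^i * Kinv (moment \<alpha> A B s) n i j * s^j) has_real_derivative
       (real i * t^(i-1)) * K i j * t^j + t^i * Kd i j * t^j + t^i * K i j * (real j * t^(j-1))) (at t)"
      by (rule DERIV_cong[OF DERIV_mult[OF DERIV_mult[OF DERIV_pow kd] DERIV_pow]]) (simp add: K_def \<mu>_def algebra_simps)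
  qed
  have aa: "a = (\<Sum>i<n. t^i * u i)"
    unfolding a_def u_def K_def by (simp add: sum_distrib_left mult_ac)
  have "t * D0 = (\<Sum>i<n. \<Sum>j<n. real i * t^i * K i j * t^j) + (\<Sum>i<n. \<Sum>j<n. t^i * K i j * (real j * t^j))
      + t * (\<Sum>i<n. \<Sum>j<n. t^i * Kd i j * t^j)"
  proof -
    have "t * D0 = (\<Sum>i<n. \<Sum>j<n. (real i * t^(i-1) * t) * K i j * t^j + t * (t^i * Kd i j * t^j) + t^i * K i j * (real j * t^(j-1) * t))"
      unfolding D0_def by (simp add: sum_distrib_left algebra_simps)
    also have "\<dots> = (\<Sum>i<n. \<Sum>j<n. real i * t^i * K i j * t^j + t * (t^i * Kd i j * t^j) + t^i * K i j * (real j * t^j))"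
      by (simp only: pow_pred_mult)
    finally show ?thesis by (simp add: sum.distrib sum_distrib_left)
  qed
  also have "(\<Sum>i<n. \<Sum>j<n. real i * t^i * K i j * t^j) = b"
    unfolding b_def K_def ..
  also have "(\<Sum>i<n. \<Sum>j<n. t^i * K i j * (real j * t^j)) = b"
  proof -
    have "(\<Sum>i<n. \<Sum>j<n. t^i * K i j * (real j * t^j)) = (\<Sum>j<n. \<Sum>i<n. real j * t^j * K j i * t^i)"
      by (subst sum.swap) (auto intro!: sum.cong simp: KS mult_ac)
    then show ?thesis unfolding b_def K_def by simp
  qed
  also have "(\<Sum>i<n. \<Sum>j<n. t^i * Kd i j * t^j) = - \<phi> * a^2"
    unfolding Kd_def aa by (simp add: power2_eq_square sum_product sum_distrib_left mult_ac)
  finally have "t * D0 = 2 * b - t * \<phi> * a^2" by simp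
  then have "D0 = (2 * b - t * \<phi> * a^2) / t" using assms(4) by (simp add: field_simps)
  then show ?thesis using der by simp
qed



theorem theorem4:
  fixes \<alpha> A B t :: real and n :: nat
  assumes "\<alpha> > 0" and "A \<ge> 0" and "B > 0" and "t > 0" and "n \<ge> 1"
  shows "(\<forall>\<^sub>F s in nhds t. (\<lambda>u. ln (hankelD \<alpha> A B n u)) differentiable (at s)) \<and>
         (deriv (\<lambda>u. ln (hankelD \<alpha> A B n u)) differentiable (at t)) \<and>
         (t\<^sup>2 * deriv (deriv (\<lambda>u. ln (hankelD \<alpha> A B n u))) t =
           - real n * (real n + \<alpha>)
           + hankelD \<alpha> A B (n + 1) t * hankelD \<alpha> A B (n - 1) t / (hankelD \<alpha> A B n t)\<^sup>2)"
proof -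
  note as = assms(1-3)
  obtain m where nm: "n = Suc m" using assms(5) by (cases n) auto
  define \<phi>f where "\<phi>f s = - B * s powr \<alpha> * exp (- s)" for s
  define af where "af s = (\<Sum>i<n. \<Sum>j<n. s^i * Kinv (moment \<alpha> A B s) n i j * s^j)" for s
  define L where "L = (\<lambda>u. ln (hankelD \<alpha> A B n u))"
  have dl: "(L has_real_derivative \<phi>f s * af s) (at s)" if "s > 0" for s
    unfolding L_def \<phi>f_def af_def by (rule lnD_deriv[OF as that])
  have ev: "\<forall>\<^sub>F s in nhds t. s > 0"
    using eventually_nhds_in_open[of "{0<..}" t] assms(4) by simp
  have C1: "\<forall>\<^sub>F s in nhds t. L differentiable (at s)"
    using ev by eventually_elim (use dl real_differentiable_def in blast)
  have evd: "\<forall>\<^sub>F s in nhds t. deriv L s = \<phi>f s * af s"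
    using ev by eventually_elim (use dl DERIV_imp_deriv in blast)
  define \<mu> where "\<mu> = moment \<alpha> A B t"
  define K where "K = Kinv \<mu> n"
  define \<phi> where "\<phi> = \<phi>f t"
  define a where "a = (\<Sum>i<n. \<Sum>j<n. t^i * K i j * t^j)"
  define b where "b = (\<Sum>i<n. \<Sum>j<n. real i * t^i * K i j * t^j)"
  define ad where "ad = (2 * b - t * \<phi> * a^2) / t"
  define \<phi>d where "\<phi>d = - B * (\<alpha> * t powr (\<alpha> - 1)) * exp (- t) + B * t powr \<alpha> * exp (- t)"
  have afa: "af t = a" unfolding af_def a_def K_def \<mu>_def ..
  have ad: "(af has_real_derivative ad) (at t)"
    unfolding af_def[abs_def] ad_def \<phi>_def \<phi>f_def a_def b_def K_def \<mu>_def
    by (rule a_deriv[OF as assms(4)])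
  have pd: "(\<phi>f has_real_derivative \<phi>d) (at t)"
    unfolding \<phi>f_def[abs_def] \<phi>d_def
    by (rule DERIV_cong[OF DERIV_mult[OF DERIV_cmult[OF has_real_derivative_powr[OF assms(4)]] DERIV_chain2[OF DERIV_exp DERIV_minus[OF DERIV_ident]]]])
       (simp add: algebra_simps)
  have d2: "((\<lambda>s. \<phi>f s * af s) has_real_derivative \<phi>d * a + \<phi> * ad) (at t)"
    by (rule DERIV_cong[OF DERIV_mult[OF pd ad]]) (simp add: afa \<phi>_def mult_ac)
  have d3: "(deriv L has_real_derivative \<phi>d * a + \<phi> * ad) (at t)"
    using d2 DERIV_cong_ev[OF refl evd refl] by simp
  have C2: "deriv L differentiable (at t)"
    using d3 real_differentiable_def by blast
  have dd: "deriv (deriv L) t = \<phi>d * a + \<phi> * ad"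
    by (rule DERIV_imp_deriv[OF d3])
  define c where "c = t * \<phi>"
  have tp: "t * t powr (\<alpha> - 1) = t powr \<alpha>"
    using assms(4) by (simp add: powr_diff)
  have lhs: "t^2 * (\<phi>d * a + \<phi> * ad) = c * (\<alpha> - t) * a + c * (2 * b - c * a^2)"
  proof -
    have "t^2 * \<phi>d = t * (- B * \<alpha> * (t * t powr (\<alpha> - 1)) * exp (- t) + B * t * t powr \<alpha> * exp (- t))"
      unfolding \<phi>d_def by (simp add: power2_eq_square algebra_simps)
    also have "\<dots> = c * (\<alpha> - t)" unfolding tp c_def \<phi>_def \<phi>f_def by (simp add: algebra_simps)
    finally have 1: "t^2 * \<phi>d = c * (\<alpha> - t)" .
    have 2: "t^2 * (\<phi> * ad) = c * (2 * b - c * a^2)"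
      unfolding ad_def c_def using assms(4) by (simp add: power2_eq_square field_simps)
    have "t^2 * (\<phi>d * a + \<phi> * ad) = (t^2 * \<phi>d) * a + t^2 * (\<phi> * ad)" by (simp add: algebra_simps)
    also have "\<dots> = c * (\<alpha> - t) * a + c * (2 * b - c * a^2)" unfolding 1 2 ..
    finally show ?thesis .
  qed
  have rel: "\<mu> (Suc k) = (real k + \<alpha> + 1) * \<mu> k - c * t ^ k" for k
  proof -
    have "t powr (\<alpha> + real k + 1) = t powr \<alpha> * t ^ k * t"
      using assms(4) by (simp add: powr_add powr_realpow)
    then show ?thesis
      unfolding \<mu>_def moment_shift[OF assms(1) less_imp_le[OF assms(4)]] c_def \<phi>_def \<phi>f_def
      by (simp add: algebra_simps)
  qed
  have Dpos: "det (hank \<mu> n) > 0" unfolding \<mu>_def by (rule hank_pos[OF as less_imp_le[OF assms(4)]])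
  have key: "c * (\<alpha> - t) * a + c * (2 * b - c * a^2) =
     - real n * (real n + \<alpha>) + (\<mu> (2*n) - (\<Sum>i<n. \<Sum>j<n. \<mu> (n+i) * K i j * \<mu> (n+j))) * K m m"
    unfolding a_def b_def K_def nm
    by (rule key_identity[OF rel]) (use Dpos nm in simp)
  have Dn1: "hankelD \<alpha> A B (n + 1) t = det (hank \<mu> n) * (\<mu> (2*n) - (\<Sum>i<n. \<Sum>j<n. \<mu> (n+i) * K i j * \<mu> (n+j)))"
    unfolding hankelD_eq \<mu>_def[symmetric] K_def using schur_hank[of \<mu> n] Dpos by simp
  have Dm: "hankelD \<alpha> A B (n - 1) t = det (hank \<mu> n) * K m m"
    unfolding hankelD_eq \<mu>_def[symmetric] K_def nm
    using cofactor_hank_last[of \<mu> m] cofactor_Kinv[of \<mu> "Suc m" m m] Dpos nm by simp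
  have Dn: "hankelD \<alpha> A B n t = det (hank \<mu> n)"
    unfolding hankelD_eq \<mu>_def ..
  have C3: "t^2 * deriv (deriv L) t = - real n * (real n + \<alpha>)
           + hankelD \<alpha> A B (n + 1) t * hankelD \<alpha> A B (n - 1) t / (hankelD \<alpha> A B n t)^2"
    unfolding dd lhs key Dn1 Dm Dn using Dpos by (simp add: power2_eq_square field_simps)
  show ?thesis using C1 C2 C3 unfolding L_def by blast
qed


end
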